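(* Let $\Omega$ be a bounded domain in $\mathbb{R}^N$ with $0\in\Omega$, $1<p<N$, $p^\ast = Np/(N-p)$, let $k\in\mathbb{N}$ with $\lambda_k<\lambda_{k+1}$, and let $\lambda_k\le\lambda<\lambda_{k+1}$. Let $C_0,\rho_0,\eta$ and $C_\rho = \{\pi_{\mathcal{M}}(u_\rho):u\in C_0\}$ be as in the context, and let $c_1>0$ be a constant such that $C_\rho\subset\Psi^{\lambda_k + c_1\rho^{N-p}}$ for all $\rho\in(0,\rho_0/2]$. Let $E_0(u) = \int_\Omega(\frac1p|\nabla u|^p - \frac\lambda p|u|^p - \frac1{p^\ast}|u|^{p^\ast})dx$. Then there is a constant $c_6>0$ such that for every $\rho\in(0,\rho_0/2]$: \[ \sup_{v\in C_\rho,\ t\ge0}E_0(tv) \le \begin{cases} 0 & \text{if } \lambda_k + c_1\rho^{N-p}\le\lambda<\lambda_{k+1},\\ c_6\,\rho^{N(N-p)/p} & \text{if } \lambda = \lambda_k.\end{cases} \]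
   Context: Work in $W^{1,p}_0(\Omega)$ with norm $\|u\| = \|\nabla u\|_{L^p}$. $\mathcal{M} = \{u:\|u\|^p=p\}$, $\Psi(u) = p/\|u\|_{L^p}^p$ on $\mathcal{M}$, $\Psi^a = \{u\in\mathcal{M}:\Psi(u)\le a\}$, $\pi_{\mathcal{M}}(u) = p^{1/p}u/\|u\|$. $i(\cdot)$ is the Fadell–Rabinowitz $\mathbb{Z}_2$-cohomological index, and $\lambda_k = \inf\{\sup_M\Psi: M\subset\mathcal{M}\text{ symmetric}, i(M)\ge k\}$. $C_0$ is a compact symmetric subset of $\Psi^{\lambda_k}$ with $i(C_0)=k$, bounded in $L^\infty(\Omega)$ and in $C^1(K)$ for each compact $K\subset\Omega$. $\rho_0 = \operatorname{dist}(0,\partial\Omega)$; $\eta:[0,\infty)\to[0,1]$ smooth, $\eta=0$ on $[0,3/4]$, $\eta=1$ on $[1,\infty)$; $u_\rho(x) = \eta(|x|/\rho)u(x)$. *)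

theory Defs
  imports "HOL-Analysis.Analysis"
begin

coinductive cinf :: "('a::euclidean_space \<Rightarrow> real) \<Rightarrow> bool" where
  "(\<forall>x. f differentiable (at x)) \<Longrightarrow>
   (\<forall>b\<in>Basis. cinf (\<lambda>x. frechet_derivative f (at x) b)) \<Longrightarrow> cinf f"

definition grad :: "('a::euclidean_space \<Rightarrow> real) \<Rightarrow> 'a \<Rightarrow> 'a" where
  "grad f x = (\<Sum>b\<in>Basis. frechet_derivative f (at x) b *\<^sub>R b)"

definition test_fun :: "'a::euclidean_space set \<Rightarrow> ('a \<Rightarrow> real) \<Rightarrow> bool" where
  "test_fun \<Omega> \<phi> \<longleftrightarrow> cinf \<phi> \<and> compact (closure {x. \<phi> x \<noteq> 0})
       \<and> closure {x. \<phi> x \<noteq> 0} \<subseteq> \<Omega>"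

abbreviation intO :: "'a::euclidean_space set \<Rightarrow> ('a \<Rightarrow> real) \<Rightarrow> real" where
  "intO \<Omega> f \<equiv> integral\<^sup>L (lebesgue_on \<Omega>) f"

definition Lp :: "'a::euclidean_space set \<Rightarrow> real \<Rightarrow> ('a \<Rightarrow> real) \<Rightarrow> bool" where
  "Lp \<Omega> p u \<longleftrightarrow> u \<in> borel_measurable (lebesgue_on \<Omega>)
      \<and> integrable (lebesgue_on \<Omega>) (\<lambda>x. \<bar>u x\<bar> powr p)"

definition weak_grad :: "'a::euclidean_space set \<Rightarrow> real \<Rightarrow> ('a \<Rightarrow> real) \<Rightarrow> ('a \<Rightarrow> 'a) \<Rightarrow> bool" where
  "weak_grad \<Omega> p u g \<longleftrightarrow> Lp \<Omega> p u
      \<and> (\<forall>b\<in>Basis. Lp \<Omega> p (\<lambda>x. g x \<bullet> b))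
      \<and> (\<forall>\<phi>. test_fun \<Omega> \<phi> \<longrightarrow> (\<forall>b\<in>Basis.
            intO \<Omega> (\<lambda>x. u x * frechet_derivative \<phi> (at x) b)
            = - intO \<Omega> (\<lambda>x. (g x \<bullet> b) * \<phi> x)))"

definition W01p :: "'a::euclidean_space set \<Rightarrow> real \<Rightarrow> ('a \<Rightarrow> real) \<Rightarrow> bool" where
  "W01p \<Omega> p u \<longleftrightarrow> (\<exists>g \<phi>. weak_grad \<Omega> p u g \<and> (\<forall>n. test_fun \<Omega> (\<phi> n))
      \<and> (\<lambda>n. intO \<Omega> (\<lambda>x. \<bar>\<phi> n x - u x\<bar> powr p)) \<longlonglongrightarrow> 0
      \<and> (\<lambda>n. intO \<Omega> (\<lambda>x. norm (grad (\<phi> n) x - g x) powr p)) \<longlonglongrightarrow> 0)"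

(* \<integral>_Omega |\<nabla>u|^p, i.e. \<parallel>u\<parallel>^p.  The weak gradient is unique a.e., so the
   infimum below is just the value for (any) weak gradient. *)
definition gradp :: "'a::euclidean_space set \<Rightarrow> real \<Rightarrow> ('a \<Rightarrow> real) \<Rightarrow> real" where
  "gradp \<Omega> p u = Inf {intO \<Omega> (\<lambda>x. norm (g x) powr p) | g. weak_grad \<Omega> p u g}"

definition Wnorm :: "'a::euclidean_space set \<Rightarrow> real \<Rightarrow> ('a \<Rightarrow> real) \<Rightarrow> real" where
  "Wnorm \<Omega> p u = gradp \<Omega> p u powr (1 / p)"

definition Lpow :: "'a::euclidean_space set \<Rightarrow> real \<Rightarrow> ('a \<Rightarrow> real) \<Rightarrow> real" where
  "Lpow \<Omega> q u = intO \<Omega> (\<lambda>x. \<bar>u x\<bar> powr q)"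

definition Mfd :: "'a::euclidean_space set \<Rightarrow> real \<Rightarrow> ('a \<Rightarrow> real) set" where
  "Mfd \<Omega> p = {u. W01p \<Omega> p u \<and> Wnorm \<Omega> p u powr p = p}"

definition Psi :: "'a::euclidean_space set \<Rightarrow> real \<Rightarrow> ('a \<Rightarrow> real) \<Rightarrow> real" where
  "Psi \<Omega> p u = p / Lpow \<Omega> p u"

definition Psi_le :: "'a::euclidean_space set \<Rightarrow> real \<Rightarrow> real \<Rightarrow> ('a \<Rightarrow> real) set" where
  "Psi_le \<Omega> p a = {u \<in> Mfd \<Omega> p. Psi \<Omega> p u \<le> a}"

definition proj_M :: "'a::euclidean_space set \<Rightarrow> real \<Rightarrow> ('a \<Rightarrow> real) \<Rightarrow> ('a \<Rightarrow> real)" where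
  "proj_M \<Omega> p u = (\<lambda>x. p powr (1 / p) * u x / Wnorm \<Omega> p u)"

definition symmetric_set :: "('a \<Rightarrow> real) set \<Rightarrow> bool" where
  "symmetric_set A \<longleftrightarrow> (\<forall>u\<in>A. (\<lambda>x. - u x) \<in> A)"

definition W_compact :: "'a::euclidean_space set \<Rightarrow> real \<Rightarrow> ('a \<Rightarrow> real) set \<Rightarrow> bool" where
  "W_compact \<Omega> p C \<longleftrightarrow> (\<forall>f. (\<forall>n. f n \<in> C) \<longrightarrow>
      (\<exists>r u. strict_mono (r :: nat \<Rightarrow> nat) \<and> u \<in> C \<and>
         (\<lambda>n. Wnorm \<Omega> p (\<lambda>x. f (r n) x - u x)) \<longlonglongrightarrow> 0))"

(* minimax values \<lambda>_k, relative to a (cohomological) index function ind *)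
definition lam :: "(('a::euclidean_space \<Rightarrow> real) set \<Rightarrow> enat) \<Rightarrow> 'a set \<Rightarrow> real \<Rightarrow> nat \<Rightarrow> real" where
  "lam ind \<Omega> p k = Inf {Sup (Psi \<Omega> p ` A) | A. A \<subseteq> Mfd \<Omega> p \<and> symmetric_set A \<and> ind A \<ge> enat k}"

definition pstar :: "'a::euclidean_space itself \<Rightarrow> real \<Rightarrow> real" where
  "pstar _ p = real DIM('a) * p / (real DIM('a) - p)"

definition E0 :: "'a::euclidean_space set \<Rightarrow> real \<Rightarrow> real \<Rightarrow> ('a \<Rightarrow> real) \<Rightarrow> real" where
  "E0 \<Omega> p lmb u = gradp \<Omega> p u / p - lmb / p * Lpow \<Omega> p u
      - Lpow \<Omega> (pstar TYPE('a) p) u / pstar TYPE('a) p"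

end

theory Submission
  imports Defs
begin

lemma gradp_nonneg:
  assumes "weak_grad \<Omega> p u g"
  shows "0 \<le> gradp \<Omega> p u"
  unfolding gradp_def
  using assms by (intro cInf_greatest) auto

lemma Mfd_gradp:
  assumes "u \<in> Mfd \<Omega> p" "0 < p"
  shows "gradp \<Omega> p u = p"
proof -
  from assms have W: "W01p \<Omega> p u" and e: "(gradp \<Omega> p u powr (1/p)) powr p = p"
    by (auto simp: Mfd_def Wnorm_def)
  from W obtain g where "weak_grad \<Omega> p u g" by (auto simp: W01p_def)
  hence nn: "0 \<le> gradp \<Omega> p u" by (rule gradp_nonneg)
  from e have "gradp \<Omega> p u powr 1 = p" using assms(2) by (simp add: powr_powr)
  thus ?thesis using nn by simp
qed

lemma weak_grad_scale:
  assumes "weak_grad \<Omega> p u g" "0 < p"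
  shows "weak_grad \<Omega> p (\<lambda>x. c * u x) (\<lambda>x. c *\<^sub>R g x)"
proof -
  have Lp: "Lp \<Omega> p (\<lambda>x. c * f x)" if "Lp \<Omega> p f" for f
  proof -
    have eq: "(\<lambda>x. \<bar>c * f x\<bar> powr p) = (\<lambda>x. \<bar>c\<bar> powr p * \<bar>f x\<bar> powr p)"
      by (simp add: abs_mult powr_mult)
    show ?thesis using that unfolding Lp_def eq by auto
  qed
  show ?thesis
    using assms unfolding weak_grad_def
    by (auto intro!: Lp simp: mult.assoc)
qed

lemma Inf_scale:
  fixes S :: "real set"
  assumes "S \<noteq> {}" "bdd_below S" "0 < c"
  shows "Inf ((*) c ` S) = c * Inf S"
proof (rule antisym)
  have bb: "bdd_below ((*) c ` S)"
  proof -
    from assms(2) obtain m where "\<forall>y\<in>S. m \<le> y" by (auto simp: bdd_below_def)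
    hence "\<forall>z\<in>(*) c ` S. c * m \<le> z" using assms(3) by auto
    thus ?thesis by (auto simp: bdd_below_def)
  qed
  have "Inf ((*) c ` S) / c \<le> Inf S"
  proof (rule cInf_greatest[OF assms(1)])
    fix y assume "y \<in> S"
    hence "Inf ((*) c ` S) \<le> c * y" by (intro cInf_lower bb) auto
    thus "Inf ((*) c ` S) / c \<le> y" using assms(3) by (simp add: field_simps)
  qed
  thus "Inf ((*) c ` S) \<le> c * Inf S" using assms(3) by (simp add: field_simps)
  show "c * Inf S \<le> Inf ((*) c ` S)"
    using assms by (intro cInf_greatest) (auto intro: cInf_lower)
qed

lemma gradp_scale:
  assumes "weak_grad \<Omega> p u g0" "0 < p" "0 < t"
  shows "gradp \<Omega> p (\<lambda>x. t * u x) = t powr p * gradp \<Omega> p u"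
proof -
  let ?S = "\<lambda>w. {intO \<Omega> (\<lambda>x. norm (g x) powr p) | g. weak_grad \<Omega> p w g}"
  have "?S (\<lambda>x. t * u x) = (*) (t powr p) ` ?S u"
  proof (rule subset_antisym; rule subsetI)
    fix y assume "y \<in> ?S (\<lambda>x. t * u x)"
    then obtain g where g: "weak_grad \<Omega> p (\<lambda>x. t * u x) g" and y: "y = intO \<Omega> (\<lambda>x. norm (g x) powr p)"
      by blast
    have "weak_grad \<Omega> p (\<lambda>x. (1/t) * (t * u x)) (\<lambda>x. (1/t) *\<^sub>R g x)"
      by (rule weak_grad_scale[OF g assms(2)])
    hence g': "weak_grad \<Omega> p u (\<lambda>x. (1/t) *\<^sub>R g x)" using assms(3) by simp
    have "y = t powr p * intO \<Omega> (\<lambda>x. norm ((1/t) *\<^sub>R g x) powr p)"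
      using assms(3) y by (simp add: powr_mult powr_divide divide_simps)
    moreover have "intO \<Omega> (\<lambda>x. norm ((1/t) *\<^sub>R g x) powr p) \<in> ?S u"
      unfolding mem_Collect_eq apply (rule exI[of _ "\<lambda>x. (1/t) *\<^sub>R g x"]) using g' apply (rule conjI[rotated])
      by (rule refl)
    ultimately show "y \<in> (*) (t powr p) ` ?S u"
      by (metis (no_types, lifting) image_eqI)
  next
    fix y assume "y \<in> (*) (t powr p) ` ?S u"
    then obtain g where g: "weak_grad \<Omega> p u g" and y: "y = t powr p * intO \<Omega> (\<lambda>x. norm (g x) powr p)"
      by blast
    have g': "weak_grad \<Omega> p (\<lambda>x. t * u x) (\<lambda>x. t *\<^sub>R g x)"
      by (rule weak_grad_scale[OF g assms(2)])
    have "y = intO \<Omega> (\<lambda>x. norm (t *\<^sub>R g x) powr p)"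
      using assms(3) y by (simp add: powr_mult)
    thus "y \<in> ?S (\<lambda>x. t * u x)"
      unfolding mem_Collect_eq apply - apply (rule exI[of _ "\<lambda>x. t *\<^sub>R g x"]) using g' apply (rule conjI[rotated])
      by assumption
  qed
  moreover have "?S u \<noteq> {}" using assms(1) by blast
  moreover have "bdd_below (?S u)" by (auto simp: bdd_below_def intro!: exI[of _ 0])
  ultimately show ?thesis unfolding gradp_def using assms(3) by (simp add: Inf_scale)
qed

lemma gradp_zero:
  shows "gradp \<Omega> p (\<lambda>x. 0) = 0"
proof -
  have w: "weak_grad \<Omega> p (\<lambda>x. 0) (\<lambda>x. 0)"
    by (simp add: weak_grad_def Lp_def)
  show ?thesis unfolding gradp_def
    apply (rule antisym)
     apply (rule cInf_lower) using w apply force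
     apply (auto simp: bdd_below_def intro!: exI[of _ 0])[1]
    apply (rule cInf_greatest) using w apply auto
    done
qed

lemma Lpow_scale:
  assumes "0 \<le> t"
  shows "Lpow \<Omega> q (\<lambda>x. t * v x) = t powr q * Lpow \<Omega> q v"
  using assms by (simp add: Lpow_def abs_mult powr_mult)


lemma Mfd_Lp: "u \<in> Mfd \<Omega> p \<Longrightarrow> Lp \<Omega> p u"
  by (auto simp: Mfd_def W01p_def weak_grad_def)

lemma Lpow_nonneg: "0 \<le> Lpow \<Omega> q u"
  unfolding Lpow_def by (rule integral_nonneg_AE) simp

lemma Lpow_pos:
  assumes "v \<in> Mfd \<Omega> p" "0 < p"
  shows "0 < Lpow \<Omega> p v"
proof (rule ccontr)
  assume "\<not> 0 < Lpow \<Omega> p v"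
  hence z: "Lpow \<Omega> p v = 0" using Lpow_nonneg[of \<Omega> p v] by linarith
  have Lp: "Lp \<Omega> p v" using assms(1) by (rule Mfd_Lp)
  hence "AE x in lebesgue_on \<Omega>. \<bar>v x\<bar> powr p = 0"
    using z unfolding Lp_def Lpow_def
    by (subst integral_nonneg_eq_0_iff_AE[symmetric]) auto
  hence ae: "AE x in lebesgue_on \<Omega>. v x = 0" by eventually_elim simp
  have w: "weak_grad \<Omega> p v (\<lambda>x. 0)"
    unfolding weak_grad_def
  proof (intro conjI allI impI ballI)
    show "Lp \<Omega> p v" by fact
    fix b :: 'a assume "b \<in> Basis"
    show "Lp \<Omega> p (\<lambda>x. (0::'a) \<bullet> b)" by (simp add: Lp_def)
  next
    fix \<phi> :: "'a \<Rightarrow> real" and b :: 'a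
    have "intO \<Omega> (\<lambda>x. v x * frechet_derivative \<phi> (at x) b) = 0"
      by (rule integral_eq_zero_AE) (use ae in eventually_elim, simp)
    thus "intO \<Omega> (\<lambda>x. v x * frechet_derivative \<phi> (at x) b) = - intO \<Omega> (\<lambda>x. ((0::'a) \<bullet> b) * \<phi> x)"
      by simp
  qed
  have "gradp \<Omega> p v \<le> 0"
    unfolding gradp_def
    apply (rule cInf_lower)
    using w apply force
    by (auto simp: bdd_below_def intro!: exI[of _ 0])
  thus False using Mfd_gradp[OF assms] assms(2) by simp
qed

lemma elem_bound:
  fixes A B t p q :: real
  assumes "0 \<le> A" "0 < B" "0 \<le> t" "0 < p" "p < q"
  shows "A * t powr p - B * t powr q \<le> A powr (q/(q-p)) * B powr (- p/(q-p))"
proof (cases "t powr (q - p) \<ge> A / B")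
  case True
  have "A * t powr p \<le> B * t powr (q-p) * t powr p"
    proof -
    have "A \<le> B * t powr (q-p)" using True assms by (simp add: divide_le_eq mult.commute)
    thus ?thesis by (intro mult_right_mono) auto
  qed
  also have "\<dots> = B * t powr q" 
    by (cases "t = 0") (use assms in \<open>simp_all add: powr_add[symmetric]\<close>)
  finally have "A * t powr p - B * t powr q \<le> 0" by simp
  also have "0 \<le> A powr (q/(q-p)) * B powr (- p/(q-p))" by simp
  finally show ?thesis .
next
  case False
  have tle: "t \<le> (A/B) powr (1/(q-p))"
  proof -
    have "t = (t powr (q-p)) powr (1/(q-p))" using assms by (simp add: powr_powr)
    also have "\<dots> \<le> (A/B) powr (1/(q-p))"
      using False assms by (intro powr_mono2) auto
    finally show ?thesis .
  qed
  have "A * t powr p - B * t powr q \<le> A * t powr p"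
    using assms by simp
  also have "\<dots> \<le> A * ((A/B) powr (1/(q-p))) powr p"
    using assms tle by (intro mult_left_mono powr_mono2) auto
  also have "\<dots> = A * (A/B) powr (p/(q-p))" by (simp add: powr_powr)
  also have "\<dots> = A powr (q/(q-p)) * B powr (- p/(q-p))"
  proof (cases "A = 0")
    case True thus ?thesis using assms by simp
  next
    case False
    hence "A > 0" using assms by simp
    have "A * (A/B) powr (p/(q-p)) = A powr 1 * A powr (p/(q-p)) * B powr (- p/(q-p))"
      using \<open>A > 0\<close> assms by (simp add: powr_divide powr_minus divide_simps)
    also have "\<dots> = A powr (q/(q-p)) * B powr (- p/(q-p))"
    proof -
      have "q/(q-p) = 1 + p/(q-p)" using assms by (simp add: field_simps)
      hence "A powr (q/(q-p)) = A powr 1 * A powr (p/(q-p))" by (simp add: powr_add)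
      thus ?thesis by simp
    qed
    finally show ?thesis .
  qed
  finally show ?thesis .
qed


lemma jensen_like:
  fixes f :: "'b \<Rightarrow> real"
  assumes fm: "finite_measure M"
    and ip: "integrable M (\<lambda>x. \<bar>f x\<bar> powr p)"
    and iq: "integrable M (\<lambda>x. \<bar>f x\<bar> powr q)"
    and pq: "0 < p" "p < q"
    and Lpos: "0 < (\<integral>x. \<bar>f x\<bar> powr p \<partial>M)"
  shows "(\<integral>x. \<bar>f x\<bar> powr p \<partial>M) powr (q/p)
           \<le> (\<integral>x. \<bar>f x\<bar> powr q \<partial>M) * measure M (space M) powr (q/p - 1)"
proof -
  define L where "L = (\<integral>x. \<bar>f x\<bar> powr p \<partial>M)"
  define Q where "Q = (\<integral>x. \<bar>f x\<bar> powr q \<partial>M)"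
  define m where "m = measure M (space M)"
  define r where "r = q / p"
  have r1: "r > 1" using pq by (simp add: r_def)
  have m0: "m > 0"
  proof (rule ccontr)
    assume "\<not> m > 0"
    hence "m = 0" using measure_nonneg[of M "space M"] by (simp add: m_def)
    hence "emeasure M (space M) = 0"
      using fm by (simp add: m_def finite_measure.emeasure_eq_measure)
    hence "AE x in M. False" by (intro AE_I[of _ _ "space M"]) auto
    hence "AE x in M. \<bar>f x\<bar> powr p = 0" by auto
    hence "L = 0" unfolding L_def by (rule integral_eq_zero_AE)
    thus False using Lpos L_def by simp
  qed
  define c where "c = L / m"
  have c0: "c > 0" using Lpos m0 by (simp add: c_def L_def)
  define r' where "r' = r / (r - 1)"
  have r'1: "r' > 1" using r1 by (simp add: r'_def field_simps)
  have conj: "1/r + 1/r' = 1" using r1 by (simp add: r'_def field_simps)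
  have pw: "\<bar>f x\<bar> powr p / c \<le> \<bar>f x\<bar> powr q / (r * c powr r) + (1 - 1/r)" for x
  proof -
    have "(\<bar>f x\<bar> powr p / c) * 1 \<le> (\<bar>f x\<bar> powr p / c) powr r / r + 1 powr r' / r'"
      using r1 r'1 conj c0 by (intro Youngs_inequality) auto
    also have "(\<bar>f x\<bar> powr p / c) powr r = \<bar>f x\<bar> powr q / c powr r"
      using c0 pq by (simp add: powr_divide powr_powr r_def)
    also have "1 powr r' / r' = 1 - 1/r" using conj by simp
    finally show ?thesis by (simp add: field_simps)
  qed
  have "(\<integral>x. \<bar>f x\<bar> powr p / c \<partial>M) \<le> (\<integral>x. \<bar>f x\<bar> powr q / (r * c powr r) + (1 - 1/r) \<partial>M)"
    using pw fm ip iq by (intro integral_mono) (auto intro: finite_measure.integrable_const)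
  also have "(\<integral>x. \<bar>f x\<bar> powr q / (r * c powr r) + (1 - 1/r) \<partial>M) = Q / (r * c powr r) + m * (1 - 1/r)"
  proof -
    have i1: "integrable M (\<lambda>x. \<bar>f x\<bar> powr q / (r * c powr r))" using iq by simp
    have i2: "integrable M (\<lambda>x. (1 - 1/r))" using fm by (rule finite_measure.integrable_const)
    show ?thesis using Bochner_Integration.integral_add[OF i1 i2] by (simp add: Q_def m_def mult.commute)
  qed
  also have "(\<integral>x. \<bar>f x\<bar> powr p / c \<partial>M) = m"
    using c0 m0 Lpos by (simp add: L_def[symmetric] c_def)
  finally have "m \<le> Q / (r * c powr r) + m * (1 - 1/r)" .
  hence "m / r \<le> Q / (r * c powr r)" by (simp add: algebra_simps)
  hence "m * c powr r \<le> Q" using r1 c0 by (simp add: field_simps)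
  moreover have "m * c powr r = L powr r * m powr (1 - r)"
    using m0 Lpos by (simp add: c_def L_def powr_divide powr_diff)
  ultimately have "L powr r * m powr (1 - r) \<le> Q" by simp
  hence "L powr r \<le> Q * m powr (r - 1)"
    using m0 by (simp add: powr_diff field_simps)
  thus ?thesis by (simp add: L_def Q_def m_def r_def)
qed


lemma key:
  fixes \<Omega> :: "'a::euclidean_space set" and v :: "'a \<Rightarrow> real"
  assumes dom: "open \<Omega>" "bounded \<Omega>"
    and p: "1 < p" "p < real DIM('a)"
    and v: "v \<in> Mfd \<Omega> p" "Psi \<Omega> p v \<le> \<mu>"
    and t: "0 \<le> t"
    and iq: "integrable (lebesgue_on \<Omega>) (\<lambda>x. \<bar>v x\<bar> powr pstar TYPE('a) p)"
  shows "\<mu> \<le> lmb \<Longrightarrow> E0 \<Omega> p lmb (\<lambda>x. t * v x) \<le> 0"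
    and "lmb \<le> \<mu> \<Longrightarrow> E0 \<Omega> p lmb (\<lambda>x. t * v x) \<le>
          ((\<mu> - lmb) / p) powr (real DIM('a) / p) * pstar TYPE('a) p powr ((real DIM('a) - p) / p)
          * measure (lebesgue_on \<Omega>) \<Omega>"
proof -
  define N where "N = real DIM('a)"
  define q where "q = pstar TYPE('a) p"
  have qdef: "q = N * p / (N - p)" by (simp add: q_def pstar_def N_def)
  have Np: "N - p > 0" using p by (simp add: N_def)
  have q_gt: "q > p" unfolding qdef using p Np by (simp add: field_simps N_def)
  have p0: "p > 0" using p by simp
  define L where "L = Lpow \<Omega> p v"
  define Q where "Q = Lpow \<Omega> q v"
  have L0: "L > 0" unfolding L_def by (rule Lpow_pos[OF v(1) p0])
  have Q0: "Q \<ge> 0" unfolding Q_def by (rule Lpow_nonneg)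
  have pmu: "p \<le> \<mu> * L" using v(2) L0 by (simp add: Psi_def L_def[symmetric] divide_le_eq)
  have gv: "gradp \<Omega> p v = p" by (rule Mfd_gradp[OF v(1) p0])
  have gt: "gradp \<Omega> p (\<lambda>x. t * v x) = t powr p * p"
  proof (cases "t = 0")
    case True thus ?thesis by (simp add: gradp_zero)
  next
    case False
    from v(1) obtain g where "weak_grad \<Omega> p v g" by (auto simp: Mfd_def W01p_def)
    thus ?thesis using gradp_scale[of \<Omega> p v g t] False t p0 gv by simp
  qed
  have E: "E0 \<Omega> p lmb (\<lambda>x. t * v x) = t powr p * (1 - lmb * L / p) - t powr q * (Q / q)"
    unfolding E0_def gt q_def[symmetric] using t p0
    by (simp add: Lpow_scale L_def Q_def field_simps)
  show "\<mu> \<le> lmb \<Longrightarrow> E0 \<Omega> p lmb (\<lambda>x. t * v x) \<le> 0"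
  proof -
    assume "\<mu> \<le> lmb"
    hence "p \<le> lmb * L" using pmu L0 by (meson mult_right_mono less_le order_trans)
    hence "1 - lmb * L / p \<le> 0" using p0 by (simp add: field_simps)
    hence "t powr p * (1 - lmb * L / p) \<le> 0" by (simp add: mult_nonneg_nonpos)
    moreover have "t powr q * (Q / q) \<ge> 0" using Q0 q_gt p0 by simp
    ultimately show ?thesis using E by linarith
  qed
  show "lmb \<le> \<mu> \<Longrightarrow> E0 \<Omega> p lmb (\<lambda>x. t * v x) \<le>
          ((\<mu> - lmb) / p) powr (real DIM('a) / p) * pstar TYPE('a) p powr ((real DIM('a) - p) / p)
          * measure (lebesgue_on \<Omega>) \<Omega>"
  proof -
    assume lm: "lmb \<le> \<mu>"
    define A where "A = (\<mu> - lmb) * L / p"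
    have A0: "A \<ge> 0" using lm L0 p0 by (simp add: A_def)
    have A1: "1 - lmb * L / p \<le> A" using pmu p0 by (simp add: A_def field_simps)
    have fm: "finite_measure (lebesgue_on \<Omega>)"
      by (rule finite_measure_lebesgue_on) (rule lmeasurable_open[OF dom(2,1)])
    have ip: "integrable (lebesgue_on \<Omega>) (\<lambda>x. \<bar>v x\<bar> powr p)"
      using Mfd_Lp[OF v(1)] by (simp add: Lp_def)
    have J: "L powr (q/p) \<le> Q * measure (lebesgue_on \<Omega>) \<Omega> powr (q/p - 1)"
      using jensen_like[OF fm ip iq[folded q_def] p0 q_gt] L0
      by (simp add: L_def Q_def Lpow_def)
    define m where "m = measure (lebesgue_on \<Omega>) \<Omega>"
    have m0: "m \<ge> 0" by (simp add: m_def)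
    have Qpos: "Q > 0"
    proof -
      have "0 < L powr (q/p)" using L0 by simp
      also have "\<dots> \<le> Q * m powr (q/p - 1)" using J by (simp add: m_def)
      finally show ?thesis using Q0 by (cases "Q = 0") auto
    qed
    define B where "B = Q / q"
    have B0: "B > 0" using Qpos q_gt p0 by (simp add: B_def)
    have "E0 \<Omega> p lmb (\<lambda>x. t * v x) \<le> A * t powr p - B * t powr q"
    proof -
      have "t powr p * (1 - lmb * L / p) \<le> t powr p * A"
        using A1 by (intro mult_left_mono) auto
      thus ?thesis unfolding E B_def by (simp add: mult.commute)
    qed
    also have "\<dots> \<le> A powr (q/(q-p)) * B powr (- p/(q-p))"
      by (rule elem_bound[OF A0 B0 t p0 q_gt])
    also have "q/(q-p) = N/p" using Np p0 by (simp add: qdef field_simps)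
    also have "- p/(q-p) = - ((N-p)/p)" using Np p0 by (simp add: qdef field_simps)
    finally have E1: "E0 \<Omega> p lmb (\<lambda>x. t * v x) \<le> A powr (N/p) * B powr (- ((N-p)/p))" .
    have J2: "L powr (N/p) \<le> Q powr ((N-p)/p) * m"
    proof -
      have e1: "q/p * ((N-p)/p) = N/p" using Np p0 by (simp add: qdef field_simps)
      have "L powr (N/p) = (L powr (q/p)) powr ((N-p)/p)"
        by (simp only: powr_powr e1)
      also have "\<dots> \<le> (Q * m powr (q/p - 1)) powr ((N-p)/p)"
        using J Np p0 L0 by (intro powr_mono2) (auto simp: m_def)
      also have "\<dots> = Q powr ((N-p)/p) * m"
      proof -
        have e2: "(q/p - 1) * ((N-p)/p) = 1" using Np p0 by (simp add: qdef field_simps)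
        have "(m powr (q/p - 1)) powr ((N-p)/p) = m powr 1"
          by (simp only: powr_powr e2)
        thus ?thesis using Q0 m0 by (simp add: powr_mult)
      qed
      finally show ?thesis .
    qed
    have "A powr (N/p) * B powr (- ((N-p)/p))
        = ((\<mu> - lmb)/p) powr (N/p) * q powr ((N-p)/p) * (L powr (N/p) / Q powr ((N-p)/p))"
      using lm L0 p0 Qpos q_gt
      by (simp add: A_def B_def powr_mult powr_divide powr_minus divide_simps)
    also have "\<dots> \<le> ((\<mu> - lmb)/p) powr (N/p) * q powr ((N-p)/p) * m"
      using J2 Qpos by (intro mult_left_mono) (auto simp: divide_le_eq mult.commute)
    finally show ?thesis using E1 by (simp add: N_def q_def m_def)
  qed
qed

theorem lemma2p5:
  fixes \<Omega> :: "'a::euclidean_space set"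
    and p lambda c1 :: real and k :: nat
    and ind :: "('a \<Rightarrow> real) set \<Rightarrow> enat"
    and C0 :: "('a \<Rightarrow> real) set"
    and \<eta> :: "real \<Rightarrow> real"
  assumes dom: "open \<Omega>" "connected \<Omega>" "bounded \<Omega>" "0 \<in> \<Omega>"
    and p: "1 < p" "p < real DIM('a)"
    and k: "1 \<le> k" "lam ind \<Omega> p k < lam ind \<Omega> p (Suc k)"
    and lambda: "lam ind \<Omega> p k \<le> lambda" "lambda < lam ind \<Omega> p (Suc k)"
    and C0: "W_compact \<Omega> p C0" "symmetric_set C0"
            "C0 \<subseteq> Psi_le \<Omega> p (lam ind \<Omega> p k)" "ind C0 = enat k"
    and C0_Linf: "\<exists>B. \<forall>u\<in>C0. AE x in lebesgue_on \<Omega>. \<bar>u x\<bar> \<le> B"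
    and C0_C1: "\<forall>u\<in>C0. (\<forall>x\<in>\<Omega>. u differentiable (at x))
                   \<and> (\<forall>b\<in>Basis. continuous_on \<Omega> (\<lambda>x. frechet_derivative u (at x) b))"
    and C0_C1_bdd: "\<forall>K. compact K \<and> K \<subseteq> \<Omega> \<longrightarrow>
                   (\<exists>B. \<forall>u\<in>C0. \<forall>x\<in>K. \<bar>u x\<bar> \<le> B \<and> norm (grad u x) \<le> B)"
    and eta: "cinf \<eta>" "\<forall>s\<ge>0. 0 \<le> \<eta> s \<and> \<eta> s \<le> 1"
             "\<forall>s\<in>{0..3/4}. \<eta> s = 0" "\<forall>s\<ge>1. \<eta> s = 1"
    and c1: "c1 > 0"
            "\<forall>\<rho>\<in>{0<..infdist 0 (frontier \<Omega>) / 2}.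
               proj_M \<Omega> p ` (\<lambda>u x. \<eta> (norm x / \<rho>) * u x) ` C0
                 \<subseteq> Psi_le \<Omega> p (lam ind \<Omega> p k + c1 * \<rho> powr (real DIM('a) - p))"
  shows "\<exists>c6>0. \<forall>\<rho>\<in>{0<..infdist 0 (frontier \<Omega>) / 2}.
           (lam ind \<Omega> p k + c1 * \<rho> powr (real DIM('a) - p) \<le> lambda \<longrightarrow>
              (\<forall>v\<in>proj_M \<Omega> p ` (\<lambda>u x. \<eta> (norm x / \<rho>) * u x) ` C0. \<forall>t\<ge>0.
                 E0 \<Omega> p lambda (\<lambda>x. t * v x) \<le> 0))
         \<and> (lambda = lam ind \<Omega> p k \<longrightarrow>
              (\<forall>v\<in>proj_M \<Omega> p ` (\<lambda>u x. \<eta> (norm x / \<rho>) * u x) ` C0. \<forall>t\<ge>0.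
                 E0 \<Omega> p lambda (\<lambda>x. t * v x)
                   \<le> c6 * \<rho> powr (real DIM('a) * (real DIM('a) - p) / p)))"
proof -
  define N where "N = real DIM('a)"
  define q where "q = pstar TYPE('a) p"
  define m where "m = measure (lebesgue_on \<Omega>) \<Omega>"
  have Np: "N - p > 0" using p by (simp add: N_def)
  have p0: "p > 0" using p by simp
  have q0: "q > 0" using Np p0 by (simp add: q_def pstar_def N_def[symmetric])
  define c6 where "c6 = (c1/p) powr (N/p) * q powr ((N-p)/p) * (m + 1)"
  have m0: "m \<ge> 0" by (simp add: m_def)
  have c6pos: "c6 > 0" using c1(1) p0 q0 m0 by (simp add: c6_def add_nonneg_pos)
  obtain B where B: "\<forall>u\<in>C0. AE x in lebesgue_on \<Omega>. \<bar>u x\<bar> \<le> B" using C0_Linf by blast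
  have fm: "finite_measure (lebesgue_on \<Omega>)"
    by (rule finite_measure_lebesgue_on) (rule lmeasurable_open[OF dom(3,1)])
  show ?thesis
  proof (intro exI[of _ c6] conjI c6pos ballI impI allI)
    fix \<rho> v and t :: real
    assume rho: "\<rho> \<in> {0<..infdist 0 (frontier \<Omega>) / 2}"
      and vin: "v \<in> proj_M \<Omega> p ` (\<lambda>u x. \<eta> (norm x / \<rho>) * u x) ` C0"
    define \<mu> where "\<mu> = lam ind \<Omega> p k + c1 * \<rho> powr (real DIM('a) - p)"
    have r0: "\<rho> > 0" using rho by simp
    have vP: "v \<in> Psi_le \<Omega> p \<mu>" using c1(2) rho vin unfolding \<mu>_def by blast
    hence vM: "v \<in> Mfd \<Omega> p" and vPsi: "Psi \<Omega> p v \<le> \<mu>" by (auto simp: Psi_le_def)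
    from vin obtain u where u: "u \<in> C0" and vdef: "v = proj_M \<Omega> p (\<lambda>x. \<eta> (norm x / \<rho>) * u x)"
      by blast
    define K where "K = \<bar>p powr (1/p) / Wnorm \<Omega> p (\<lambda>x. \<eta> (norm x / \<rho>) * u x)\<bar>"
    have K0: "K \<ge> 0" by (simp add: K_def)
    have vbound: "\<bar>v x\<bar> \<le> K * \<bar>u x\<bar>" for x
    proof -
      have e: "\<bar>v x\<bar> = K * (\<bar>\<eta> (norm x / \<rho>)\<bar> * \<bar>u x\<bar>)"
        by (simp add: vdef proj_M_def K_def abs_mult)
      have "\<bar>\<eta> (norm x / \<rho>)\<bar> \<le> 1" using eta(2) r0 by (simp add: abs_le_iff)
      hence "\<bar>\<eta> (norm x / \<rho>)\<bar> * \<bar>u x\<bar> \<le> \<bar>u x\<bar>" by (simp add: mult_left_le_one_le)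
      thus ?thesis using e K0 by (simp add: mult_left_mono)
    qed
    have iq: "integrable (lebesgue_on \<Omega>) (\<lambda>x. \<bar>v x\<bar> powr pstar TYPE('a) p)"
    proof (rule finite_measure.integrable_const_bound[OF fm, where B="(K * B) powr q"])
      show "AE x in lebesgue_on \<Omega>. norm (\<bar>v x\<bar> powr pstar TYPE('a) p) \<le> (K * B) powr q"
        using B u
      proof -
        have "AE x in lebesgue_on \<Omega>. \<bar>u x\<bar> \<le> B" using B u by blast
        thus ?thesis
        proof eventually_elim
          case (elim x)
          have "\<bar>v x\<bar> \<le> K * B" using vbound[of x] elim K0 by (meson mult_left_mono order_trans)
          thus ?case using q0 by (simp add: q_def[symmetric] powr_mono2)
        qed
      qed
      have "v \<in> borel_measurable (lebesgue_on \<Omega>)" using Mfd_Lp[OF vM] by (simp add: Lp_def)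
      thus "(\<lambda>x. \<bar>v x\<bar> powr pstar TYPE('a) p) \<in> borel_measurable (lebesgue_on \<Omega>)" by measurable
    qed
    {
      assume "lam ind \<Omega> p k + c1 * \<rho> powr (real DIM('a) - p) \<le> lambda" "0 \<le> t"
      then show "E0 \<Omega> p lambda (\<lambda>x. t * v x) \<le> 0"
        using key(1)[OF dom(1,3) p vM vPsi _ iq] unfolding \<mu>_def by blast
    }
    {
      assume lk: "lambda = lam ind \<Omega> p k" and t: "0 \<le> t"
      have "E0 \<Omega> p lambda (\<lambda>x. t * v x) \<le>
          ((\<mu> - lambda) / p) powr (real DIM('a) / p) * pstar TYPE('a) p powr ((real DIM('a) - p) / p)
          * measure (lebesgue_on \<Omega>) \<Omega>"
        using key(2)[OF dom(1,3) p vM vPsi t iq, of lambda] lk c1(1) r0 unfolding \<mu>_def by simp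
      also have "\<dots> = (c1/p) powr (N/p) * \<rho> powr (N * (N - p) / p) * q powr ((N-p)/p) * m"
      proof -
        have "((\<mu> - lambda) / p) powr (N / p) = (c1/p * \<rho> powr (N - p)) powr (N / p)"
          by (simp add: \<mu>_def lk N_def)
        also have "\<dots> = (c1/p) powr (N/p) * \<rho> powr (N * (N - p) / p)"
        proof -
          have "(c1/p * \<rho> powr (N - p)) powr (N / p) = (c1/p) powr (N/p) * (\<rho> powr (N - p)) powr (N / p)"
            using c1(1) p0 r0 by (intro powr_mult)
          also have "(\<rho> powr (N - p)) powr (N / p) = \<rho> powr (N * (N - p) / p)"
            by (simp add: powr_powr mult.commute)
          finally show ?thesis .
        qed
        finally show ?thesis by (simp add: N_def q_def m_def)
      qed
      also have "\<dots> \<le> c6 * \<rho> powr (N * (N - p) / p)"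
      proof -
        have "\<rho> powr (N * (N - p) / p) * m \<le> \<rho> powr (N * (N - p) / p) * (m + 1)"
          by (intro mult_left_mono) auto
        hence "(c1/p) powr (N/p) * q powr ((N-p)/p) * (\<rho> powr (N * (N - p) / p) * m)
             \<le> (c1/p) powr (N/p) * q powr ((N-p)/p) * (\<rho> powr (N * (N - p) / p) * (m + 1))"
          by (intro mult_left_mono) auto
        thus ?thesis unfolding c6_def by (simp add: ac_simps)
      qed
      finally show "E0 \<Omega> p lambda (\<lambda>x. t * v x) \<le> c6 * \<rho> powr (real DIM('a) * (real DIM('a) - p) / p)"
        by (simp add: N_def)
    }
  qed
qed

end
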